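(* Let $G=(V,E)$ be a graph and let $B_1,\dots,B_m$ be bicliques whose edge sets partition $E$, with fixed orientations $B_i=L_i\times R_i$ ($L_i,R_i\subseteq V$ disjoint, the edges of $B_i$ being all $\{u,v\}$ with $u\in L_i$, $v\in R_i$). For $i\in[m]$ define $h_i:V\to\{0,1,\star\}$ by $h_i(v)=0$ if $v\in L_i$, $h_i(v)=1$ if $v\in R_i$, and $h_i(v)=\star$ otherwise, and let $\mathbb{G}=\{h_1,\dots,h_m\}\subseteq\{0,1,\star\}^V$. Then $\mathrm{LD}(\mathbb{G})\le 2$.
   Context: Littlestone dimension of a partial class $\mathbb{H}\subseteq\{0,1,\star\}^{\mathcal{X}}$: the largest $d$ such that there is a full binary tree of height $d$ with internal nodes $v\in\bigcup_{k<d}\{0,1\}^k$ labelled by points $x_v\in\mathcal{X}$, such that for every $y\in\{0,1\}^d$ some $h\in\mathbb{H}$ satisfies $h(x_{y_1\cdots y_{i-1}})=y_i$ for all $i\in[d]$. *)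

theory Defs
  imports "HOL-Library.Extended_Nat"
begin

datatype pval = Zero | One | Star

definition bit_val :: "bool \<Rightarrow> pval" where
  "bit_val b = (if b then One else Zero)"

text \<open>A Littlestone tree of height d over domain X: internal nodes are the
  bit strings (lists) of length < d, labelled by points of X via x.\<close>
definition ltree_shattered ::
  "'a set \<Rightarrow> ('a \<Rightarrow> pval) set \<Rightarrow> nat \<Rightarrow> (bool list \<Rightarrow> 'a) \<Rightarrow> bool" where
  "ltree_shattered X H d x \<longleftrightarrow>
     (\<forall>v. length v < d \<longrightarrow> x v \<in> X) \<and>
     (\<forall>y. length y = d \<longrightarrow>
        (\<exists>h\<in>H. \<forall>i<d. h (x (take i y)) = bit_val (y ! i)))"

definition littlestone_dim :: "'a set \<Rightarrow> ('a \<Rightarrow> pval) set \<Rightarrow> enat" where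
  "littlestone_dim X H = Sup {enat d | d. \<exists>x. ltree_shattered X H d x}"

definition is_graph :: "'a set \<Rightarrow> 'a set set \<Rightarrow> bool" where
  "is_graph V E \<longleftrightarrow> (\<forall>e\<in>E. \<exists>u v. u \<in> V \<and> v \<in> V \<and> u \<noteq> v \<and> e = {u, v})"

definition biclique_edges :: "'a set \<Rightarrow> 'a set \<Rightarrow> 'a set set" where
  "biclique_edges L R = {{u, v} | u v. u \<in> L \<and> v \<in> R}"

definition biclique_concept :: "'a set \<Rightarrow> 'a set \<Rightarrow> 'a \<Rightarrow> pval" where
  "biclique_concept L R v = (if v \<in> L then Zero else if v \<in> R then One else Star)"

end

theory Submission
  imports Defs
begin

theorem claim3p1:
  fixes V :: "'a set" and E :: "'a set set" and m :: nat
    and L R :: "nat \<Rightarrow> 'a set"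
  assumes graph: "is_graph V E"
    and sub: "\<And>i. i < m \<Longrightarrow> L i \<subseteq> V \<and> R i \<subseteq> V"
    and disj: "\<And>i. i < m \<Longrightarrow> L i \<inter> R i = {}"
    and nonempty: "\<And>i. i < m \<Longrightarrow> L i \<noteq> {} \<and> R i \<noteq> {}"
    and cover: "(\<Union>i<m. biclique_edges (L i) (R i)) = E"
    and pairwise: "\<And>i j. i < m \<Longrightarrow> j < m \<Longrightarrow> i \<noteq> j \<Longrightarrow>
                    biclique_edges (L i) (R i) \<inter> biclique_edges (L j) (R j) = {}"
  shows "littlestone_dim V ((\<lambda>i. biclique_concept (L i) (R i)) ` {..<m}) \<le> 2"
proof -
  let ?H = "(\<lambda>i. biclique_concept (L i) (R i)) ` {..<m}"
  have bound: "d \<le> 2" if sh: "ltree_shattered V ?H d x" for d x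
  proof (rule ccontr)
    assume "\<not> d \<le> 2"
    hence d3: "d \<ge> 3" by simp
    define y where "y = [False, True, False] @ replicate (d - 3) False"
    define y' where "y' = [False, True, True] @ replicate (d - 3) False"
    have ly: "length y = d" "length y' = d" using d3 by (auto simp: y_def y'_def)
    obtain i where i: "i < m" and hi: "\<forall>k<d. biclique_concept (L i) (R i) (x (take k y)) = bit_val (y ! k)"
      using sh ly unfolding ltree_shattered_def by blast
    obtain j where j: "j < m" and hj: "\<forall>k<d. biclique_concept (L j) (R j) (x (take k y')) = bit_val (y' ! k)"
      using sh ly unfolding ltree_shattered_def by blast
    have i0: "biclique_concept (L i) (R i) (x []) = Zero" using hi[rule_format, of 0] d3 by (simp add: y_def bit_val_def)
    have i1: "biclique_concept (L i) (R i) (x [False]) = One" using hi[rule_format, of 1] d3 by (simp add: y_def bit_val_def)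
    have i2: "biclique_concept (L i) (R i) (x [False,True]) = Zero" using hi[rule_format, of 2] d3 by (simp add: y_def bit_val_def numeral_2_eq_2)
    have j0: "biclique_concept (L j) (R j) (x []) = Zero" using hj[rule_format, of 0] d3 by (simp add: y'_def bit_val_def)
    have j1: "biclique_concept (L j) (R j) (x [False]) = One" using hj[rule_format, of 1] d3 by (simp add: y'_def bit_val_def)
    have j2: "biclique_concept (L j) (R j) (x [False,True]) = One" using hj[rule_format, of 2] d3 by (simp add: y'_def bit_val_def numeral_2_eq_2)
    have "x [] \<in> L i" "x [False] \<in> R i" "x [] \<in> L j" "x [False] \<in> R j"
      using i0 i1 j0 j1 by (auto simp: biclique_concept_def split: if_splits)
    hence "{x [], x [False]} \<in> biclique_edges (L i) (R i) \<inter> biclique_edges (L j) (R j)"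
      unfolding biclique_edges_def by blast
    hence "i = j" using pairwise i j by blast
    thus False using i2 j2 by simp
  qed
  show ?thesis unfolding littlestone_dim_def
    by (rule Sup_least) (auto dest: bound simp: numeral_eq_enat)
qed

end
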